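(* Let $H_1,H_2$ be non-empty graphs with $m_2(H_1)\ge m_2(H_2)>1$, let $\varepsilon>0$, and suppose every graph in $\hat{\mathcal{A}}(H_1,H_2,\varepsilon)$ has a valid edge-colouring for $H_1$ and $H_2$. Then every $(H_1,H_2)$-sparse $\hat{\mathcal{A}}$-graph $G$ has a valid edge-colouring for $H_1$ and $H_2$ (and such a colouring is obtained by colouring each member of $\mathcal{S}_G$ independently with a valid edge-colouring).
   Context: For a graph $H$ write $v_H=|V(H)|$, $e_H=|E(H)|$; $d_2(H) = (e_H-1)/(v_H-2)$ if $H$ is non-empty and $v_H \geq 3$, $d_2(K_2)=1/2$, $d_2(H)=0$ otherwise; $m_2(H)=\max_{J\subseteq H} d_2(J)$. $d_2(H_1,H_2) = e_{H_1}/(v_{H_1} - 2 + 1/m_2(H_2))$ if $H_2$ is non-empty and $v_{H_1}\ge2$, and $0$ otherwise; $m_2(H_1,H_2)=\max_{J\subseteq H_1} d_2(J,H_2)$. For a graph $A$, $d(A)=e_A/v_A$ ($0$ if $v_A=0$) and $m(A)=\max_{J\subseteq A} d(J)$. A red/blue colouring of the edges of $G$ is a valid edge-colouring for $H_1$ and $H_2$ if it contains no red copy of $H_1$ and no blue copy of $H_2$. For a graph $G$, $\mathcal{R}_G$ (resp. $\mathcal{L}_G$) is the set of subgraphs of $G$ isomorphic to $H_1$ (resp. $H_2$); $\mathcal{L}^*_G=\{L\in\mathcal{L}_G:\forall e\in E(L)\ \exists R\in\mathcal{R}_G,\ E(L)\cap E(R)=\{e\}\}$. $\mathcal{C}(H_1,H_2)$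 is the class of graphs in which every edge $e$ satisfies $E(L)\cap E(R)=\{e\}$ for some $L\in\mathcal{L}_G,R\in\mathcal{R}_G$; $\mathcal{C}^*(H_1,H_2)$ the class of graphs in which every edge lies in some $L\in\mathcal{L}^*_G$. $\hat{\mathcal{A}}=\hat{\mathcal{A}}(H_1,H_2,\varepsilon)$ is the class of $2$-connected graphs $A$ with $m(A)\le m_2(H_1,H_2)+\varepsilon$ such that $A\in\mathcal{C}^*(H_1,H_2)$ if $m_2(H_1)>m_2(H_2)$ and $A\in\mathcal{C}(H_1,H_2)$ if $m_2(H_1)=m_2(H_2)$. For a graph $G$, $\mathcal{S}_G$ is the family of subgraphs $S\subseteq G$ isomorphic to a member of $\hat{\mathcal{A}}$ that are maximal, i.e. there is no $S'\subseteq G$ with $S\subsetneq S'$ and $S'$ isomorphic to a member of $\hat{\mathcal{A}}$; for $e\in E(G)$, $\mathcal{S}_G(e)=\{S\in\mathcal{S}_G: e\in E(S)\}$. $G$ is an $\hat{\mathcal{A}}$-graph if $|\mathcal{S}_G(e)|=1$ for every $e\in E(G)$. $\mathcal{T}_G$ is the family of subgraphs $T\subseteq G$ with $T\cong H_1$ or $T\cong H_2$ such that $|\bigcup_{e\in E(T)}\mathcal{S}_G(e)|\ge 2$; $G$ is $(H_1,H_2)$-sparse if $\mathcal{T}_G=\emptyset$. *)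

theory Defs
  imports Complex_Main
begin

type_synonym 'a graph = "'a set \<times> 'a set set"

definition verts :: "'a graph \<Rightarrow> 'a set" where "verts G = fst G"
definition edges :: "'a graph \<Rightarrow> 'a set set" where "edges G = snd G"

definition graph :: "'a graph \<Rightarrow> bool" where
  "graph G \<longleftrightarrow> finite (verts G) \<and>
     (\<forall>e\<in>edges G. \<exists>u v. u \<noteq> v \<and> e = {u, v} \<and> u \<in> verts G \<and> v \<in> verts G)"

definition vnum :: "'a graph \<Rightarrow> nat" where "vnum G = card (verts G)"
definition enum :: "'a graph \<Rightarrow> nat" where "enum G = card (edges G)"

definition subgraph :: "'a graph \<Rightarrow> 'a graph \<Rightarrow> bool" where
  "subgraph J H \<longleftrightarrow> graph J \<and> verts J \<subseteq> verts H \<and> edges J \<subseteq> edges H"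

definition iso :: "'a graph \<Rightarrow> 'b graph \<Rightarrow> bool" where
  "iso G H \<longleftrightarrow> (\<exists>f. bij_betw f (verts G) (verts H) \<and>
     (\<forall>u\<in>verts G. \<forall>v\<in>verts G. {u, v} \<in> edges G \<longleftrightarrow> {f u, f v} \<in> edges H))"

definition d2 :: "'a graph \<Rightarrow> real" where
  "d2 H = (if edges H \<noteq> {} \<and> vnum H \<ge> 3 then (real (enum H) - 1) / (real (vnum H) - 2)
           else if vnum H = 2 \<and> enum H = 1 then 1/2 else 0)"

definition m2 :: "'a graph \<Rightarrow> real" where
  "m2 H = Max {d2 J | J. subgraph J H}"

definition d2pair :: "'a graph \<Rightarrow> 'b graph \<Rightarrow> real" where
  "d2pair H1 H2 = (if edges H2 \<noteq> {} \<and> vnum H1 \<ge> 2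
      then real (enum H1) / (real (vnum H1) - 2 + 1 / m2 H2) else 0)"

definition m2pair :: "'a graph \<Rightarrow> 'b graph \<Rightarrow> real" where
  "m2pair H1 H2 = Max {d2pair J H2 | J. subgraph J H1}"

definition dens :: "'a graph \<Rightarrow> real" where
  "dens A = (if vnum A = 0 then 0 else real (enum A) / real (vnum A))"

definition mdens :: "'a graph \<Rightarrow> real" where
  "mdens A = Max {dens J | J. subgraph J A}"

text \<open>Copies and colourings (colour True = red, False = blue).\<close>
definition copies :: "'a graph \<Rightarrow> 'b graph \<Rightarrow> 'a graph set" where
  "copies G H = {J. subgraph J G \<and> iso J H}"

definition valid_col :: "'b graph \<Rightarrow> 'c graph \<Rightarrow> 'a graph \<Rightarrow> ('a set \<Rightarrow> bool) \<Rightarrow> bool" where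
  "valid_col H1 H2 G col \<longleftrightarrow>
     \<not> (\<exists>R\<in>copies G H1. \<forall>e\<in>edges R. col e) \<and>
     \<not> (\<exists>L\<in>copies G H2. \<forall>e\<in>edges L. \<not> col e)"

definition Lstar :: "'b graph \<Rightarrow> 'c graph \<Rightarrow> 'a graph \<Rightarrow> 'a graph set" where
  "Lstar H1 H2 G = {L\<in>copies G H2. \<forall>e\<in>edges L. \<exists>R\<in>copies G H1. edges L \<inter> edges R = {e}}"

definition classC :: "'b graph \<Rightarrow> 'c graph \<Rightarrow> 'a graph \<Rightarrow> bool" where
  "classC H1 H2 G \<longleftrightarrow> (\<forall>e\<in>edges G. \<exists>L\<in>copies G H2. \<exists>R\<in>copies G H1. edges L \<inter> edges R = {e})"

definition classCstar :: "'b graph \<Rightarrow> 'c graph \<Rightarrow> 'a graph \<Rightarrow> bool" where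
  "classCstar H1 H2 G \<longleftrightarrow> (\<forall>e\<in>edges G. \<exists>L\<in>Lstar H1 H2 G. e \<in> edges L)"

definition gconnected :: "'a graph \<Rightarrow> bool" where
  "gconnected G \<longleftrightarrow> verts G \<noteq> {} \<and>
     (\<forall>u\<in>verts G. \<forall>v\<in>verts G. (\<lambda>x y. {x, y} \<in> edges G)\<^sup>*\<^sup>* u v)"

definition del_vert :: "'a graph \<Rightarrow> 'a \<Rightarrow> 'a graph" where
  "del_vert G x = (verts G - {x}, {e\<in>edges G. x \<notin> e})"

definition two_connected :: "'a graph \<Rightarrow> bool" where
  "two_connected G \<longleftrightarrow> vnum G \<ge> 3 \<and> gconnected G \<and> (\<forall>x\<in>verts G. gconnected (del_vert G x))"

definition Ahat :: "'b graph \<Rightarrow> 'c graph \<Rightarrow> real \<Rightarrow> 'a graph \<Rightarrow> bool" where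
  "Ahat H1 H2 \<epsilon> A \<longleftrightarrow> graph A \<and> two_connected A \<and> mdens A \<le> m2pair H1 H2 + \<epsilon> \<and>
     (m2 H1 > m2 H2 \<longrightarrow> classCstar H1 H2 A) \<and>
     (m2 H1 = m2 H2 \<longrightarrow> classC H1 H2 A)"

definition SG :: "'b graph \<Rightarrow> 'c graph \<Rightarrow> real \<Rightarrow> 'a graph \<Rightarrow> 'a graph set" where
  "SG H1 H2 \<epsilon> G = {S. subgraph S G \<and> Ahat H1 H2 \<epsilon> S \<and>
      \<not> (\<exists>S'. subgraph S' G \<and> subgraph S S' \<and> S \<noteq> S' \<and> Ahat H1 H2 \<epsilon> S')}"

definition SGe :: "'b graph \<Rightarrow> 'c graph \<Rightarrow> real \<Rightarrow> 'a graph \<Rightarrow> 'a set \<Rightarrow> 'a graph set" where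
  "SGe H1 H2 \<epsilon> G e = {S\<in>SG H1 H2 \<epsilon> G. e \<in> edges S}"

definition Ahat_graph :: "'b graph \<Rightarrow> 'c graph \<Rightarrow> real \<Rightarrow> 'a graph \<Rightarrow> bool" where
  "Ahat_graph H1 H2 \<epsilon> G \<longleftrightarrow> (\<forall>e\<in>edges G. card (SGe H1 H2 \<epsilon> G e) = 1)"

definition TG :: "'b graph \<Rightarrow> 'c graph \<Rightarrow> real \<Rightarrow> 'a graph \<Rightarrow> 'a graph set" where
  "TG H1 H2 \<epsilon> G = {T. subgraph T G \<and> (iso T H1 \<or> iso T H2) \<and>
      card (\<Union>e\<in>edges T. SGe H1 H2 \<epsilon> G e) \<ge> 2}"

definition sparse :: "'b graph \<Rightarrow> 'c graph \<Rightarrow> real \<Rightarrow> 'a graph \<Rightarrow> bool" where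
  "sparse H1 H2 \<epsilon> G \<longleftrightarrow> TG H1 H2 \<epsilon> G = {}"

end

theory Submission
  imports Defs
begin

lemma graph_finite_edges: "graph G \<Longrightarrow> finite (edges G)"
proof -
  assume g: "graph G"
  have "edges G \<subseteq> Pow (verts G)" using g by (fastforce simp: graph_def)
  moreover have "finite (verts G)" using g by (simp add: graph_def)
  ultimately show ?thesis by (meson finite_Pow_iff finite_subset)
qed

lemma iso_sym: assumes "iso G H" shows "iso H G"
proof -
  obtain f where f: "bij_betw f (verts G) (verts H)"
    "\<forall>u\<in>verts G. \<forall>v\<in>verts G. {u, v} \<in> edges G \<longleftrightarrow> {f u, f v} \<in> edges H"
    using assms unfolding iso_def by blast
  define g where "g = the_inv_into (verts G) f"
  have gb: "bij_betw g (verts H) (verts G)" unfolding g_def using f(1) by (rule bij_betw_the_inv_into)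
  have fg: "\<And>x. x \<in> verts H \<Longrightarrow> f (g x) = x" unfolding g_def using f(1) f_the_inv_into_f_bij_betw by metis
  have "\<forall>u\<in>verts H. \<forall>v\<in>verts H. {u, v} \<in> edges H \<longleftrightarrow> {g u, g v} \<in> edges G"
  proof (intro ballI)
    fix u v assume u: "u \<in> verts H" and v: "v \<in> verts H"
    have "g u \<in> verts G" "g v \<in> verts G" using gb u v bij_betwE by blast+
    then show "{u, v} \<in> edges H \<longleftrightarrow> {g u, g v} \<in> edges G" using f(2) fg[OF u] fg[OF v] by metis
  qed
  then show ?thesis unfolding iso_def using gb by blast
qed

lemma iso_trans: assumes "iso G H" "iso H K" shows "iso G K"
proof -
  obtain f where f: "bij_betw f (verts G) (verts H)"
    "\<forall>u\<in>verts G. \<forall>v\<in>verts G. {u, v} \<in> edges G \<longleftrightarrow> {f u, f v} \<in> edges H"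
    using assms unfolding iso_def by blast
  obtain g where g: "bij_betw g (verts H) (verts K)"
    "\<forall>u\<in>verts H. \<forall>v\<in>verts H. {u, v} \<in> edges H \<longleftrightarrow> {g u, g v} \<in> edges K"
    using assms unfolding iso_def by blast
  have "bij_betw (g \<circ> f) (verts G) (verts K)" using f(1) g(1) by (rule bij_betw_trans)
  moreover have "\<forall>u\<in>verts G. \<forall>v\<in>verts G. {u, v} \<in> edges G \<longleftrightarrow> {(g \<circ> f) u, (g \<circ> f) v} \<in> edges K"
  proof (intro ballI)
    fix u v assume u: "u \<in> verts G" and v: "v \<in> verts G"
    have "f u \<in> verts H" "f v \<in> verts H" using f(1) u v bij_betwE by blast+
    then show "{u, v} \<in> edges G \<longleftrightarrow> {(g \<circ> f) u, (g \<circ> f) v} \<in> edges K" using f(2) g(2) u v by simp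
  qed
  ultimately show ?thesis unfolding iso_def by blast
qed

lemma copy_move:
  assumes gS: "graph S" and gJ: "graph J" and iJ: "iso J H" and sub: "edges J \<subseteq> edges S"
    and cardle: "card (verts H) \<le> card (verts S)"
  shows "\<exists>J'. J' \<in> copies S H \<and> edges J' = edges J"
proof -
  define N where "N = \<Union>(edges J)"
  define I where "I = verts J - N"
  have finJ: "finite (verts J)" using gJ by (simp add: graph_def)
  have finS: "finite (verts S)" using gS by (simp add: graph_def)
  have NJ: "N \<subseteq> verts J" unfolding N_def using gJ by (fastforce simp: graph_def)
  have NS: "N \<subseteq> verts S" unfolding N_def using gS sub by (fastforce simp: graph_def)
  have finN: "finite N" using NJ finJ finite_subset by blast
  have cJH: "card (verts J) = card (verts H)" using iJ unfolding iso_def using bij_betw_same_card by blast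
  have cI: "card I = card (verts J) - card N" unfolding I_def using NJ finN card_Diff_subset by blast
  have cSN: "card (verts S - N) = card (verts S) - card N" using NS finN card_Diff_subset by blast
  have "card I \<le> card (verts S - N)" using cI cSN cJH cardle by linarith
  then obtain K where K: "K \<subseteq> verts S - N" "card K = card I" "finite K"
    by (rule obtain_subset_with_card_n)
  have finI: "finite I" unfolding I_def using finJ by simp
  obtain g where g: "bij_betw g I K" using finite_same_card_bij[OF finI K(3)] K(2) by metis
  define h where "h x = (if x \<in> I then g x else x)" for x
  have hI: "bij_betw h I K" using g by (rule bij_betw_cong[THEN iffD1, rotated]) (simp add: h_def)
  have hN: "bij_betw h N N" unfolding h_def I_def
    by (rule bij_betw_cong[THEN iffD1, of _ id, rotated]) auto
  have "bij_betw h (I \<union> N) (K \<union> N)" using bij_betw_combine[OF hI hN] K(1) by blast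
  moreover have "I \<union> N = verts J" using NJ I_def by blast
  ultimately have hb: "bij_betw h (verts J) (verts (N \<union> K, edges J))" by (simp add: verts_def Un_commute)
  have KN: "K \<inter> N = {}" using K(1) by blast
  have hK: "\<And>x. x \<in> I \<Longrightarrow> h x \<in> K" using hI bij_betwE by blast
  have iso1: "iso J (N \<union> K, edges J)"
    unfolding iso_def
  proof (intro exI[of _ h] conjI hb ballI)
    fix u v assume u: "u \<in> verts J" and v: "v \<in> verts J"
    show "{u, v} \<in> edges J \<longleftrightarrow> {h u, h v} \<in> edges (N \<union> K, edges J)"
    proof
      assume e: "{u, v} \<in> edges J"
      then have "u \<in> N" "v \<in> N" unfolding N_def by blast+
      then have "h u = u" "h v = v" unfolding h_def I_def by auto
      then show "{h u, h v} \<in> edges (N \<union> K, edges J)" using e by (simp add: edges_def)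
    next
      assume e: "{h u, h v} \<in> edges (N \<union> K, edges J)"
      then have e': "{h u, h v} \<in> edges J" by (simp add: edges_def)
      then have "h u \<in> N" "h v \<in> N" unfolding N_def by blast+
      then have "u \<notin> I" "v \<notin> I" using hK KN by blast+
      then have "h u = u" "h v = v" unfolding h_def by auto
      then show "{u, v} \<in> edges J" using e' by simp
    qed
  qed
  have iso2: "iso (N \<union> K, edges J) H" using iso_trans[OF iso_sym[OF iso1] iJ] .
  have gJ': "graph (N \<union> K, edges J)"
    unfolding graph_def verts_def edges_def
  proof (simp, intro conjI ballI)
    show "finite N" "finite K" using finN K(3) by auto
    fix e assume e: "e \<in> snd J"
    then obtain u v where uv: "u \<noteq> v" "e = {u, v}" using gJ unfolding graph_def edges_def by blast
    then have "u \<in> N" "v \<in> N" using e unfolding N_def edges_def by blast+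
    then show "\<exists>u v. u \<noteq> v \<and> e = {u, v} \<and> (u \<in> N \<or> u \<in> K) \<and> (v \<in> N \<or> v \<in> K)" using uv by blast
  qed
  have "subgraph (N \<union> K, edges J) S" unfolding subgraph_def using gJ' NS K(1) sub
    by (auto simp: verts_def edges_def)
  then show ?thesis using iso2 unfolding copies_def by (intro exI[of _ "(N \<union> K, edges J)"]) (simp add: edges_def)
qed


lemma two_conn_edges: assumes "two_connected S" shows "edges S \<noteq> {}"
proof -
  have "card (verts S) \<ge> 3" using assms by (simp add: two_connected_def vnum_def)
  then have "card (verts S) \<ge> 2" by simp
  then obtain T where T: "T \<subseteq> verts S" "card T = 2" by (rule obtain_subset_with_card_n) auto
  then obtain u v where uv: "u \<noteq> v" "u \<in> verts S" "v \<in> verts S" by (auto simp: card_2_iff)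
  then have "(\<lambda>x y. {x, y} \<in> edges S)\<^sup>*\<^sup>* u v" using assms by (simp add: two_connected_def gconnected_def)
  then show ?thesis using uv(1) by (cases rule: converse_rtranclpE) auto
qed

lemma copy_card: assumes "J \<in> copies S H" "graph S" shows "card (verts H) \<le> card (verts S)"
proof -
  have "card (verts J) = card (verts H)" using assms unfolding copies_def iso_def using bij_betw_same_card by blast
  moreover have "verts J \<subseteq> verts S" using assms by (simp add: copies_def subgraph_def)
  moreover have "finite (verts S)" using assms by (simp add: graph_def)
  ultimately show ?thesis by (metis card_mono)
qed

lemma Ahat_cards: assumes "Ahat H1 H2 \<epsilon> S" "m2 H1 \<ge> m2 H2"
  shows "card (verts H1) \<le> card (verts S) \<and> card (verts H2) \<le> card (verts S)"
proof -
  have gS: "graph S" using assms by (simp add: Ahat_def)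
  have "two_connected S" using assms by (simp add: Ahat_def)
  then obtain e where e: "e \<in> edges S" using two_conn_edges by blast
  have "\<exists>L\<in>copies S H2. \<exists>R\<in>copies S H1. True"
  proof (cases "m2 H1 > m2 H2")
    case True
    then have "classCstar H1 H2 S" using assms by (simp add: Ahat_def)
    then obtain L where L: "L \<in> Lstar H1 H2 S" "e \<in> edges L" using e by (auto simp: classCstar_def)
    then have "L \<in> copies S H2" "\<exists>R\<in>copies S H1. edges L \<inter> edges R = {e}" unfolding Lstar_def by auto
    then show ?thesis by blast
  next
    case False
    then have "classC H1 H2 S" using assms by (simp add: Ahat_def)
    then obtain L R where "L \<in> copies S H2" "R \<in> copies S H1" using e unfolding classC_def by meson
    then show ?thesis by blast
  qed
  then obtain L R where "L \<in> copies S H2" "R \<in> copies S H1" by blast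
  then show ?thesis using copy_card[OF _ gS] by metis
qed


lemma iso_edges_ne: assumes "iso T H" "graph H" "edges H \<noteq> {}" shows "edges T \<noteq> {}"
proof -
  obtain f where f: "bij_betw f (verts H) (verts T)"
    "\<forall>u\<in>verts H. \<forall>v\<in>verts H. {u, v} \<in> edges H \<longleftrightarrow> {f u, f v} \<in> edges T"
    using iso_sym[OF assms(1)] unfolding iso_def by blast
  obtain e where e: "e \<in> edges H" using assms(3) by blast
  then obtain u v where "e = {u, v}" "u \<in> verts H" "v \<in> verts H" using assms(2) unfolding graph_def by blast
  then have "{f u, f v} \<in> edges T" using f(2) e by blast
  then show ?thesis by blast
qed

lemma single_S:
  assumes sp: "sparse H1 H2 \<epsilon> G" and ag: "Ahat_graph H1 H2 \<epsilon> G" and gG: "graph G"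
    and T: "subgraph T G" "iso T H1 \<or> iso T H2" and ne: "edges T \<noteq> {}"
  shows "\<exists>S. \<forall>e\<in>edges T. SGe H1 H2 \<epsilon> G e = {S}"
proof -
  have TE: "edges T \<subseteq> edges G" using T by (simp add: subgraph_def)
  have finT: "finite (edges T)" using graph_finite_edges[OF gG] TE finite_subset by blast
  have one: "\<And>e. e \<in> edges T \<Longrightarrow> \<exists>S. SGe H1 H2 \<epsilon> G e = {S}"
    using ag TE unfolding Ahat_graph_def by (metis card_1_singletonE subsetD)
  have "T \<notin> TG H1 H2 \<epsilon> G" using sp by (simp add: sparse_def)
  then have lt: "card (\<Union>e\<in>edges T. SGe H1 H2 \<epsilon> G e) < 2" using T unfolding TG_def by auto
  have fin: "finite (\<Union>e\<in>edges T. SGe H1 H2 \<epsilon> G e)"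
    using finT one by (metis finite.emptyI finite.insertI finite_UN_I)
  obtain e0 where e0: "e0 \<in> edges T" using ne by blast
  obtain S where S: "SGe H1 H2 \<epsilon> G e0 = {S}" using one[OF e0] by blast
  have "\<forall>e\<in>edges T. SGe H1 H2 \<epsilon> G e = {S}"
  proof
    fix e assume e: "e \<in> edges T"
    obtain S' where S': "SGe H1 H2 \<epsilon> G e = {S'}" using one[OF e] by blast
    show "SGe H1 H2 \<epsilon> G e = {S}"
    proof (rule ccontr)
      assume "SGe H1 H2 \<epsilon> G e \<noteq> {S}"
      then have "S \<noteq> S'" using S' by simp
      moreover have "{S, S'} \<subseteq> (\<Union>e\<in>edges T. SGe H1 H2 \<epsilon> G e)" using S S' e e0 by blast
      ultimately have "card {S, S'} \<le> card (\<Union>e\<in>edges T. SGe H1 H2 \<epsilon> G e)"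
        using fin card_mono by blast
      then show False using lt \<open>S \<noteq> S'\<close> by simp
    qed
  qed
  then show ?thesis by blast
qed

lemma main_part:
  fixes H1 :: "'b graph" and H2 :: "'c graph" and G :: "'a graph" and \<epsilon> :: real
  assumes "graph H1" and "graph H2" and "edges H1 \<noteq> {}" and "edges H2 \<noteq> {}"
    and "m2 H1 \<ge> m2 H2"
    and "graph G" and "sparse H1 H2 \<epsilon> G" and "Ahat_graph H1 H2 \<epsilon> G"
    and cS: "\<forall>S\<in>SG H1 H2 \<epsilon> G. valid_col H1 H2 S (c S)"
  shows "valid_col H1 H2 G (\<lambda>e. c (THE S. S \<in> SGe H1 H2 \<epsilon> G e) e)"
proof -
  let ?col = "\<lambda>e. c (THE S. S \<in> SGe H1 H2 \<epsilon> G e) e"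
  have gen: "\<exists>S\<in>SG H1 H2 \<epsilon> G. \<exists>T'. T' \<in> copies S H \<and> edges T' = edges T \<and>
               (\<forall>e\<in>edges T. ?col e = c S e)"
    if T: "T \<in> copies G H" and iH: "iso T H1 \<or> iso T H2" and ne: "edges T \<noteq> {}"
      and HH: "\<And>S :: 'a graph. Ahat H1 H2 \<epsilon> S \<Longrightarrow> card (verts H) \<le> card (verts S)" for T :: "'a graph" and H :: "'d graph"
  proof -
    have sT: "subgraph T G" and isoT: "iso T H" using T by (auto simp: copies_def)
    obtain S where S: "\<forall>e\<in>edges T. SGe H1 H2 \<epsilon> G e = {S}"
      using single_S[OF assms(7,8,6) sT iH ne] by blast
    obtain e0 where e0: "e0 \<in> edges T" using ne by blast
    have SSG: "S \<in> SG H1 H2 \<epsilon> G" using S e0 unfolding SGe_def by blast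
    have sub: "edges T \<subseteq> edges S" using S unfolding SGe_def by blast
    have AS: "Ahat H1 H2 \<epsilon> S" using SSG by (simp add: SG_def)
    have gS: "graph S" using AS by (simp add: Ahat_def)
    have cards: "card (verts H) \<le> card (verts S)" using HH[OF AS] .
    obtain T' where T': "T' \<in> copies S H" "edges T' = edges T"
      using copy_move[OF gS _ isoT sub cards] sT by (auto simp: subgraph_def)
    have "\<forall>e\<in>edges T. ?col e = c S e"
    proof
      fix e assume "e \<in> edges T"
      then have "SGe H1 H2 \<epsilon> G e = {S}" using S by blast
      then have "(THE S. S \<in> SGe H1 H2 \<epsilon> G e) = S" by simp
      then show "?col e = c S e" by simp
    qed
    then show ?thesis using SSG T' by blast
  qed
  show ?thesis unfolding valid_col_def
  proof (intro conjI notI)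
    assume "\<exists>R\<in>copies G H1. \<forall>e\<in>edges R. ?col e"
    then obtain R where R: "R \<in> copies G H1" "\<forall>e\<in>edges R. ?col e" by blast
    have "iso R H1" using R by (simp add: copies_def)
    then obtain S R' where S: "S \<in> SG H1 H2 \<epsilon> G" "R' \<in> copies S H1" "edges R' = edges R"
       "\<forall>e\<in>edges R. ?col e = c S e" using gen[OF R(1)] iso_edges_ne[OF _ assms(1,3)] Ahat_cards[OF _ assms(5)] by blast
    have "\<forall>e\<in>edges R'. c S e" using S R(2) by auto
    then show False using cS S(1,2) unfolding valid_col_def by blast
  next
    assume "\<exists>L\<in>copies G H2. \<forall>e\<in>edges L. \<not> ?col e"
    then obtain L where L: "L \<in> copies G H2" "\<forall>e\<in>edges L. \<not> ?col e" by blast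
    have "iso L H2" using L by (simp add: copies_def)
    then obtain S L' where S: "S \<in> SG H1 H2 \<epsilon> G" "L' \<in> copies S H2" "edges L' = edges L"
       "\<forall>e\<in>edges L. ?col e = c S e" using gen[OF L(1)] iso_edges_ne[OF _ assms(2,4)] Ahat_cards[OF _ assms(5)] by blast
    have "\<forall>e\<in>edges L'. \<not> c S e" using S L(2) by auto
    then show False using cS S(1,2) unfolding valid_col_def by blast
  qed
qed

theorem lemma5p1:
  fixes H1 :: "'b graph" and H2 :: "'c graph" and G :: "'a graph" and \<epsilon> :: real
  assumes "graph H1" and "graph H2" and "edges H1 \<noteq> {}" and "edges H2 \<noteq> {}"
    and "m2 H1 \<ge> m2 H2" and "m2 H2 > 1" and "\<epsilon> > 0"
    and "\<forall>A :: 'a graph. Ahat H1 H2 \<epsilon> A \<longrightarrow> (\<exists>col. valid_col H1 H2 A col)"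
    and "graph G" and "sparse H1 H2 \<epsilon> G" and "Ahat_graph H1 H2 \<epsilon> G"
  shows "(\<exists>col. valid_col H1 H2 G col) \<and>
    (\<forall>c :: 'a graph \<Rightarrow> 'a set \<Rightarrow> bool.
       (\<forall>S\<in>SG H1 H2 \<epsilon> G. valid_col H1 H2 S (c S)) \<longrightarrow>
       valid_col H1 H2 G (\<lambda>e. c (THE S. S \<in> SGe H1 H2 \<epsilon> G e) e))"
proof -
  have all: "\<forall>c :: 'a graph \<Rightarrow> 'a set \<Rightarrow> bool.
       (\<forall>S\<in>SG H1 H2 \<epsilon> G. valid_col H1 H2 S (c S)) \<longrightarrow>
       valid_col H1 H2 G (\<lambda>e. c (THE S. S \<in> SGe H1 H2 \<epsilon> G e) e)"
    using main_part[OF assms(1-5,9-11)] by blast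
  define c0 where "c0 S = (SOME col. valid_col H1 H2 S col)" for S :: "'a graph"
  have "\<forall>S\<in>SG H1 H2 \<epsilon> G. valid_col H1 H2 S (c0 S)"
  proof
    fix S assume "S \<in> SG H1 H2 \<epsilon> G"
    then have "Ahat H1 H2 \<epsilon> S" by (simp add: SG_def)
    then have "\<exists>col. valid_col H1 H2 S col" using assms(8) by blast
    then show "valid_col H1 H2 S (c0 S)" unfolding c0_def by (rule someI_ex)
  qed
  then have "valid_col H1 H2 G (\<lambda>e. c0 (THE S. S \<in> SGe H1 H2 \<epsilon> G e) e)" using all by blast
  then show ?thesis using all by blast
qed

end
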